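(* Let $T\ge2$ and let $\tau^{*,1}, \tau^{*,2}, \ldots, \tau^{*,T-1}\in[0,\infty)$ be asymptotically optimal for iteration $T$. Then for every $t<T$, $\tau^{*,1}, \ldots, \tau^{*,t-1}$ are asymptotically optimal for iteration $t$.
   Context: Fix $\delta\in(0,1)$, a noise variance $\sigma_\omega^2\ge0$, and a probability distribution $p_\beta$ on $\mathbb{R}$ with finite second moment. Let $B\sim p_\beta$ and $W\sim N(0,1)$ be independent, and let $\eta(a;\tau)=(|a|-\tau)_+\,\mathrm{sign}(a)$ be soft thresholding. The state evolution of approximate message passing (AMP) with thresholds $\tau^1,\tau^2,\ldots\ge0$ is $(\sigma^0)^2=\mathbb{E}[B^2]/\delta$ and $(\sigma^{t+1})^2=\sigma_\omega^2+\frac1\delta\mathbb{E}_{B,W}[(\eta(B+\sigma^tW;\tau^t)-B)^2]$; write $\sigma^T(\tau^1,\ldots,\tau^{T-1})$ for the resulting value at step $T$. (By the AMP state evolution theorem, $\sigma^t$ determines the almost-sure limit of the per-coordinate MSE of the AMP iterates in the asymptotic Gaussian-design setting.) A sequence $\tau^{*,1},\ldots,\tau^{*,T-1}$ is called asymptotically optimal for iteration $T$ if $\sigma^T(\tau^{*,1},\ldots,\tau^{*,T-1})\le\sigma^T(\tau^1,\ldots,\tau^{T-1})$ for all $(\tau^1,\ldots,\tau^{T-1})\in[0,\infty)^{T-1}$. (The paper assumes such minimizers exist, which excludes the case $p_\beta=\delta_0$.) *)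

theory Defs
  imports "HOL-Probability.Probability"
begin

definition soft_thr :: "real \<Rightarrow> real \<Rightarrow> real" where
  "soft_thr a \<tau> = max (\<bar>a\<bar> - \<tau>) 0 * sgn a"

definition std_gauss :: "real measure" where
  "std_gauss = density lborel std_normal_density"

definition se_mse :: "real measure \<Rightarrow> real \<Rightarrow> real \<Rightarrow> real" where
  "se_mse p s \<tau> =
     (\<integral>b. (\<integral>w. (soft_thr (b + s * w) \<tau> - b)\<^sup>2 \<partial>std_gauss) \<partial>p)"

text \<open>State evolution.  se_aux p delta sw2 tau k is sigma^(k+1):
  sigma^1 is the initial value sqrt(E[B^2]/delta) and
  sigma^(t+1) = sqrt(sw2 + (1/delta) E[(eta(B + sigma^t W; tau^t) - B)^2]) for t >= 1,
  so that sigma^T depends exactly on tau^1, ..., tau^(T-1).\<close>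
primrec se_aux :: "real measure \<Rightarrow> real \<Rightarrow> real \<Rightarrow> (nat \<Rightarrow> real) \<Rightarrow> nat \<Rightarrow> real" where
  "se_aux p \<delta> sw2 \<tau> 0 = sqrt ((\<integral>b. b\<^sup>2 \<partial>p) / \<delta>)"
| "se_aux p \<delta> sw2 \<tau> (Suc k) =
     sqrt (sw2 + (1 / \<delta>) * se_mse p (se_aux p \<delta> sw2 \<tau> k) (\<tau> (Suc k)))"

definition se_sigma :: "real measure \<Rightarrow> real \<Rightarrow> real \<Rightarrow> nat \<Rightarrow> (nat \<Rightarrow> real) \<Rightarrow> real" where
  "se_sigma p \<delta> sw2 T \<tau> = se_aux p \<delta> sw2 \<tau> (T - 1)"

definition asymp_optimal :: "real measure \<Rightarrow> real \<Rightarrow> real \<Rightarrow> nat \<Rightarrow> (nat \<Rightarrow> real) \<Rightarrow> bool" where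
  "asymp_optimal p \<delta> sw2 T \<tau> \<longleftrightarrow>
     (\<forall>i\<in>{1..<T}. 0 \<le> \<tau> i) \<and>
     (\<forall>\<tau>'. (\<forall>i\<in>{1..<T}. 0 \<le> \<tau>' i) \<longrightarrow> se_sigma p \<delta> sw2 T \<tau> \<le> se_sigma p \<delta> sw2 T \<tau>')"

end

theory Submission
  imports Defs
begin

lemma soft_thr_med:
  assumes "0 \<le> s" "0 \<le> a"
  shows "soft_thr (b + s * w) (a * s) - b = max (s * (w - a)) (min (s * (w + a)) (- b))"
proof -
  have e: "s * (w - a) = s * w - a * s" "s * (w + a) = s * w + a * s" by (simp_all add: algebra_simps)
  have as: "a * s \<ge> 0" using assms by simp
  consider "b + s * w > a * s" | "b + s * w < - (a * s)" | "\<bar>b + s * w\<bar> \<le> a * s" by linarith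
  then show ?thesis
  proof cases
    case 1
    then have "soft_thr (b + s * w) (a * s) = b + s * w - a * s" using as
      by (simp add: soft_thr_def)
    then show ?thesis using 1 unfolding e by (simp add: max_def min_def)
  next
    case 2
    then have "soft_thr (b + s * w) (a * s) = b + s * w + a * s" using as
      by (auto simp add: soft_thr_def sgn_if max_def)
    then show ?thesis using 2 as unfolding e by (simp add: max_def min_def)
  next
    case 3
    then have "soft_thr (b + s * w) (a * s) = 0"
      by (simp add: soft_thr_def)
    then show ?thesis using 3 unfolding e by (simp add: max_def min_def abs_if split: if_splits)
  qed
qed

lemma med_aux3:
  fixes x1 y1 x2 y2 c :: real
  assumes "x1 \<le> 0" "0 \<le> y1" "y1 \<le> y2" "0 \<le> c"
  shows "max x1 (min y1 c) \<le> max x2 (min y2 c)" "0 \<le> max x1 (min y1 c)"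
  using assms by (auto simp: max_def min_def)

lemma med_aux4:
  fixes x1 y1 x2 y2 c :: real
  assumes "x2 \<le> x1" "x1 \<le> 0" "0 \<le> y1" "0 \<le> y2" "c < 0"
  shows "max x2 (min y2 c) \<le> max x1 (min y1 c)" "max x1 (min y1 c) \<le> 0"
  using assms by (auto simp: max_def min_def)

lemma sq2:
  fixes x y :: real
  assumes "x \<le> y" "y \<le> 0"
  shows "y\<^sup>2 \<le> x\<^sup>2"
proof -
  have "(- y)\<^sup>2 \<le> (- x)\<^sup>2" using assms by (intro power_mono) auto
  then show ?thesis by simp
qed

lemma med_mono:
  fixes s1 s2 a w c :: real
  assumes "0 \<le> s1" "s1 \<le> s2" "0 \<le> a"
  shows "(max (s1 * (w - a)) (min (s1 * (w + a)) c))\<^sup>2 \<le> (max (s2 * (w - a)) (min (s2 * (w + a)) c))\<^sup>2"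
proof -
  have d: "\<And>x::real. 0 \<le> x \<Longrightarrow> s1 * x \<le> s2 * x" "\<And>x::real. x \<le> 0 \<Longrightarrow> s2 * x \<le> s1 * x"
    using assms by (auto intro: mult_right_mono mult_right_mono_neg)
  have p: "\<And>x::real. 0 \<le> x \<Longrightarrow> 0 \<le> s1 * x" "\<And>x::real. x \<le> 0 \<Longrightarrow> s1 * x \<le> 0"
    using assms by (auto simp: mult_nonneg_nonpos)
  have sq: "\<And>x y::real. \<bar>x\<bar> \<le> \<bar>y\<bar> \<Longrightarrow> x\<^sup>2 \<le> y\<^sup>2" by (metis power2_abs power_mono abs_ge_zero)
  have h: "s1 * (w - a) \<le> s1 * (w + a)" "s2 * (w - a) \<le> s2 * (w + a)"
    using assms by (auto intro!: mult_left_mono)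
  consider "0 \<le> w - a" | "w + a \<le> 0" | "w - a < 0" "0 < w + a" "0 \<le> c" | "w - a < 0" "0 < w + a" "c < 0"
    by linarith
  then show ?thesis
  proof cases
    case 1
    then have "w + a \<ge> 0" using assms by linarith
    then have "s1 * (w - a) \<le> s2 * (w - a)" "s1 * (w + a) \<le> s2 * (w + a)" "0 \<le> s1 * (w - a)"
      using 1 d p by auto
    then show ?thesis by (intro sq) (use h in \<open>auto simp: max_def min_def\<close>)
  next
    case 2
    then have "w - a \<le> 0" using assms by linarith
    then have "s2 * (w - a) \<le> s1 * (w - a)" "s2 * (w + a) \<le> s1 * (w + a)" "s1 * (w + a) \<le> 0"
      using 2 d p by auto
    then show ?thesis by (intro sq) (use h in \<open>auto simp: max_def min_def\<close>)
  next
    case 3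
    then have "s2 * (w - a) \<le> s1 * (w - a)" "s1 * (w + a) \<le> s2 * (w + a)" "s1 * (w - a) \<le> 0"
      "0 \<le> s1 * (w + a)" using d p by auto
    then have "max (s1 * (w - a)) (min (s1 * (w + a)) c) \<le> max (s2 * (w - a)) (min (s2 * (w + a)) c)"
      "0 \<le> max (s1 * (w - a)) (min (s1 * (w + a)) c)"
      using 3 med_aux3(1)[of "s1 * (w - a)" "s1 * (w + a)" "s2 * (w + a)" c "s2 * (w - a)"] med_aux3(2)[of "s1 * (w - a)" "s1 * (w + a)" "s2 * (w + a)" c] by blast+
    then show ?thesis by (intro power_mono)
  next
    case 4
    then have "s2 * (w - a) \<le> s1 * (w - a)" "s1 * (w - a) \<le> 0"
      "0 \<le> s1 * (w + a)" "0 \<le> s2 * (w + a)" using d p assms by auto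
    then have "max (s2 * (w - a)) (min (s2 * (w + a)) c) \<le> max (s1 * (w - a)) (min (s1 * (w + a)) c)"
      "max (s1 * (w - a)) (min (s1 * (w + a)) c) \<le> 0"
      using 4 med_aux4(1)[of "s2 * (w - a)" "s1 * (w - a)" "s1 * (w + a)" "s2 * (w + a)" c] med_aux4(2)[of "s2 * (w - a)" "s1 * (w - a)" "s1 * (w + a)" "s2 * (w + a)" c] by blast+
    then show ?thesis by (rule sq2)
  qed
qed

lemma med_strict:
  fixes s1 s2 a w b :: real
  assumes "0 \<le> s1" "s1 < s2" "0 \<le> a"
    and w: "w > a * (s1 + s2) / (s2 - s1) + \<bar>b\<bar> / s2 + a"
  shows "(max (s1 * (w - a)) (min (s1 * (w + a)) (- b)))\<^sup>2 < (max (s2 * (w - a)) (min (s2 * (w + a)) (- b)))\<^sup>2"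
proof -
  have s2: "s2 > 0" using assms by linarith
  have "a * (s1 + s2) / (s2 - s1) \<ge> 0" using assms by auto
  moreover have "\<bar>b\<bar> / s2 \<ge> 0" using s2 by auto
  ultimately have w1: "w - a > a * (s1 + s2) / (s2 - s1)" "w - a > \<bar>b\<bar> / s2" "w - a > 0" using w by linarith+
  have pos: "s2 - s1 > 0" using assms by simp
  have "a * (s1 + s2) / (s2 - s1) * (s2 - s1) < (w - a) * (s2 - s1)"
    by (rule mult_strict_right_mono[OF w1(1) pos])
  moreover have "a * (s1 + s2) / (s2 - s1) * (s2 - s1) = a * (s1 + s2)" using pos by (metis less_irrefl nonzero_eq_divide_eq)
  ultimately have "(w - a) * (s2 - s1) > a * (s1 + s2)" by simp
  moreover have "s2 * (w - a) - s1 * (w + a) = (w - a) * (s2 - s1) - 2 * a * s1" by (simp add: algebra_simps)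
  moreover have "a * (s1 + s2) \<ge> a * (2 * s1)" using assms by (intro mult_left_mono) auto
  ultimately have A: "s2 * (w - a) > s1 * (w + a)" by linarith
  have "s2 * (w - a) > \<bar>b\<bar>" using w1(2) s2 by (simp add: pos_divide_less_eq mult.commute)
  then have B: "s2 * (w - a) > - b" by linarith
  have C: "s1 * (w - a) \<ge> 0" using assms w1 by auto
  have m2: "max (s2 * (w - a)) (min (s2 * (w + a)) (- b)) = s2 * (w - a)" using B by auto
  have "max (s1 * (w - a)) (min (s1 * (w + a)) (- b)) < s2 * (w - a)"
    using A assms w1 C by (auto simp: max_def min_def mult_left_mono)
  moreover have "0 \<le> max (s1 * (w - a)) (min (s1 * (w + a)) (- b))" using C by auto
  ultimately show ?thesis unfolding m2 by (intro power_strict_mono) auto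
qed


lemma soft_thr_meas[measurable]:
  "f \<in> borel_measurable M \<Longrightarrow> g \<in> borel_measurable M \<Longrightarrow> (\<lambda>x. soft_thr (f x) (g x)) \<in> borel_measurable M"
proof -
  assume f: "f \<in> borel_measurable M" and g: "g \<in> borel_measurable M"
  have "(\<lambda>x. sgn (f x)) \<in> borel_measurable M"
    using measurable_compose[OF f borel_measurable_sgn] by (simp add: o_def)
  then show ?thesis unfolding soft_thr_def using f g by measurable
qed

lemma soft_thr_abs: "0 \<le> t \<Longrightarrow> \<bar>soft_thr x t\<bar> \<le> \<bar>x\<bar>"
  unfolding soft_thr_def by (auto simp: abs_mult sgn_if)

lemma k_bound:
  assumes "0 \<le> t"
  shows "(soft_thr (b + s * w) t - b)\<^sup>2 \<le> 8 * b\<^sup>2 + 2 * s\<^sup>2 * w\<^sup>2"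
proof -
  have "\<bar>soft_thr (b + s * w) t - b\<bar> \<le> 2 * \<bar>b\<bar> + \<bar>s\<bar> * \<bar>w\<bar>"
  proof -
    have "\<bar>b + s * w\<bar> \<le> \<bar>b\<bar> + \<bar>s\<bar> * \<bar>w\<bar>" by (metis abs_mult abs_triangle_ineq)
    then show ?thesis using soft_thr_abs[OF assms, of "b + s * w"] abs_triangle_ineq4[of "soft_thr (b + s * w) t" b]
      by linarith
  qed
  then have "(soft_thr (b + s * w) t - b)\<^sup>2 \<le> (2 * \<bar>b\<bar> + \<bar>s\<bar> * \<bar>w\<bar>)\<^sup>2"
    by (metis abs_ge_zero power2_abs power_mono)
  also have "\<dots> \<le> 8 * b\<^sup>2 + 2 * s\<^sup>2 * w\<^sup>2"
  proof -
    have sq2: "(x + y)\<^sup>2 \<le> 2 * x\<^sup>2 + 2 * y\<^sup>2" for x y :: real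
    proof -
      have "(x + y)\<^sup>2 + (x - y)\<^sup>2 = 2 * x\<^sup>2 + 2 * y\<^sup>2" by (simp add: power2_eq_square algebra_simps)
      moreover have "(x - y)\<^sup>2 \<ge> 0" by simp
      ultimately show ?thesis by linarith
    qed
    have "(2 * \<bar>b\<bar>)\<^sup>2 = 4 * b\<^sup>2" "(\<bar>s\<bar> * \<bar>w\<bar>)\<^sup>2 = s\<^sup>2 * w\<^sup>2"
      by (simp_all add: power_mult_distrib)
    then show ?thesis using sq2[of "2 * \<bar>b\<bar>" "\<bar>s\<bar> * \<bar>w\<bar>"] by linarith
  qed
  finally show ?thesis .
qed

lemma sg_prob: "prob_space std_gauss"
  unfolding std_gauss_def by (rule prob_space_normal_density) (rule zero_less_one)

lemma sg_sets[simp, measurable_cong]: "sets std_gauss = sets borel"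
  unfolding std_gauss_def by simp

lemma sg_space[simp]: "space std_gauss = UNIV"
  unfolding std_gauss_def by simp

lemma sg_sq: "integrable std_gauss (\<lambda>w. w\<^sup>2)"
  unfolding std_gauss_def
  by (subst integrable_density) (auto simp: integrable_std_normal_moment)

lemma sg_pos: "emeasure std_gauss {M<..<M+1} \<noteq> 0"
proof
  assume h: "emeasure std_gauss {M<..<M+1} = 0"
  have "AE w in std_gauss. w \<notin> {M<..<M+1}"
    by (subst AE_iff_measurable[where N="{M<..<M+1}"]) (use h in auto)
  then have "AE w in lborel. 0 < std_normal_density w \<longrightarrow> w \<notin> {M<..<M+1}"
    unfolding std_gauss_def by (subst (asm) AE_density) auto
  moreover have "AE w in lborel. 0 < std_normal_density w"
    by (intro AE_I2) (simp add: normal_density_pos)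
  ultimately have "AE w in lborel. w \<notin> {M<..<M+1}"
    by eventually_elim auto
  then have "emeasure lborel {M<..<M+1} = 0"
    by (subst (asm) AE_iff_measurable[where N="{M<..<M+1}"]) auto
  then show False by simp
qed

lemma k_integrable:
  assumes "0 \<le> t"
  shows "integrable std_gauss (\<lambda>w. (soft_thr (b + s * w) t - b)\<^sup>2)"
proof -
  interpret prob_space std_gauss by (rule sg_prob)
  have "integrable std_gauss (\<lambda>w. 8 * b\<^sup>2 + 2 * s\<^sup>2 * w\<^sup>2)"
    using sg_sq by auto
  then show ?thesis
    by (rule Bochner_Integration.integrable_bound) (use k_bound[OF assms] in auto)
qed

lemma gauss_strict:
  assumes "0 \<le> a" "0 \<le> s1" "s1 < s2"
  shows "(\<integral>w. (soft_thr (b + s1 * w) (a * s1) - b)\<^sup>2 \<partial>std_gauss)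
       < (\<integral>w. (soft_thr (b + s2 * w) (a * s2) - b)\<^sup>2 \<partial>std_gauss)"
proof -
  interpret prob_space std_gauss by (rule sg_prob)
  define M where "M = a * (s1 + s2) / (s2 - s1) + \<bar>b\<bar> / s2 + a"
  show ?thesis
  proof (rule integral_less_AE[where A="{M<..<M+1}"])
    show "integrable std_gauss (\<lambda>w. (soft_thr (b + s1 * w) (a * s1) - b)\<^sup>2)"
      "integrable std_gauss (\<lambda>w. (soft_thr (b + s2 * w) (a * s2) - b)\<^sup>2)"
      using assms by (auto intro!: k_integrable)
    show "emeasure std_gauss {M<..<M+1} \<noteq> 0" by (rule sg_pos)
    show "{M<..<M+1} \<in> sets std_gauss" by simp
    show "AE w in std_gauss. w \<in> {M<..<M+1} \<longrightarrow> (soft_thr (b + s1 * w) (a * s1) - b)\<^sup>2 \<noteq> (soft_thr (b + s2 * w) (a * s2) - b)\<^sup>2"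
    proof (intro AE_I2 impI)
      fix w assume "w \<in> {M<..<M+1}"
      then have "M < w" by simp
      then have "(soft_thr (b + s1 * w) (a * s1) - b)\<^sup>2 < (soft_thr (b + s2 * w) (a * s2) - b)\<^sup>2"
        using assms med_strict[of s1 s2 a b w] unfolding M_def by (simp add: soft_thr_med)
      then show "(soft_thr (b + s1 * w) (a * s1) - b)\<^sup>2 \<noteq> (soft_thr (b + s2 * w) (a * s2) - b)\<^sup>2"
        by simp
    qed
    show "AE w in std_gauss. (soft_thr (b + s1 * w) (a * s1) - b)\<^sup>2 \<le> (soft_thr (b + s2 * w) (a * s2) - b)\<^sup>2"
      using assms med_mono[of s1 s2 a] by (intro AE_I2) (auto simp: soft_thr_med)
  qed
qed


lemma G_meas:
  assumes "sets p = sets borel"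
  shows "(\<lambda>b. \<integral>w. (soft_thr (b + s * w) t - b)\<^sup>2 \<partial>std_gauss) \<in> borel_measurable p"
proof -
  interpret sg: prob_space std_gauss by (rule sg_prob)
  have m: "(\<lambda>(b, w). (soft_thr (b + s * w) t - b)\<^sup>2) \<in> borel_measurable (borel \<Otimes>\<^sub>M borel)"
    by measurable
  have "(\<lambda>(b, w). (soft_thr (b + s * w) t - b)\<^sup>2) \<in> borel_measurable (p \<Otimes>\<^sub>M std_gauss)"
  proof -
    have e: "sets (p \<Otimes>\<^sub>M std_gauss) = sets (borel \<Otimes>\<^sub>M borel)"
      by (rule sets_pair_measure_cong[OF assms sg_sets])
    show ?thesis unfolding measurable_cong_sets[OF e refl] by (rule m)
  qed
  then show ?thesis by (rule sg.borel_measurable_lebesgue_integral[where f="\<lambda>b w. (soft_thr (b + s * w) t - b)\<^sup>2"])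
qed

lemma G_int:
  assumes p: "prob_space p" and sp: "sets p = sets borel" and ib: "integrable p (\<lambda>b. b\<^sup>2)" and t: "0 \<le> t"
  shows "integrable p (\<lambda>b. \<integral>w. (soft_thr (b + s * w) t - b)\<^sup>2 \<partial>std_gauss)"
proof -
  interpret sg: prob_space std_gauss by (rule sg_prob)
  interpret pp: prob_space p by (rule p)
  define C where "C = (\<integral>w. w\<^sup>2 \<partial>std_gauss)"
  have bnd: "\<bar>\<integral>w. (soft_thr (b + s * w) t - b)\<^sup>2 \<partial>std_gauss\<bar> \<le> 8 * b\<^sup>2 + 2 * s\<^sup>2 * C" for b
  proof -
    have "0 \<le> (\<integral>w. (soft_thr (b + s * w) t - b)\<^sup>2 \<partial>std_gauss)" by simp
    moreover have "(\<integral>w. (soft_thr (b + s * w) t - b)\<^sup>2 \<partial>std_gauss) \<le> (\<integral>w. 8 * b\<^sup>2 + 2 * s\<^sup>2 * w\<^sup>2 \<partial>std_gauss)"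
      using sg_sq by (intro integral_mono k_integrable t k_bound) auto
    moreover have "(\<integral>w. 8 * b\<^sup>2 + 2 * s\<^sup>2 * w\<^sup>2 \<partial>std_gauss) = 8 * b\<^sup>2 + 2 * s\<^sup>2 * C"
      unfolding C_def using sg_sq sg.prob_space by (subst Bochner_Integration.integral_add) auto
    ultimately show ?thesis by linarith
  qed
  have bnd2: "norm (\<integral>w. (soft_thr (b + s * w) t - b)\<^sup>2 \<partial>std_gauss) \<le> norm (8 * b\<^sup>2 + 2 * s\<^sup>2 * C)" for b
    using bnd[of b] abs_ge_self[of "8 * b\<^sup>2 + 2 * s\<^sup>2 * C"] unfolding real_norm_def by linarith
  have "integrable p (\<lambda>b. 8 * b\<^sup>2 + 2 * s\<^sup>2 * C)" using ib by auto
  then show ?thesis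
    by (rule Bochner_Integration.integrable_bound) (rule G_meas[OF sp], rule AE_I2[OF bnd2])
qed

lemma key_step:
  assumes p: "prob_space p" and sp: "sets p = sets borel" and ib: "integrable p (\<lambda>b. b\<^sup>2)"
    and s: "0 \<le> s1" "s1 < s2" and t: "0 \<le> t"
  shows "\<exists>t'. 0 \<le> t' \<and> se_mse p s1 t' < se_mse p s2 t"
proof -
  interpret pp: prob_space p by (rule p)
  define a where "a = t / s2"
  have s2: "s2 > 0" using s by linarith
  have a: "0 \<le> a" using t s2 by (simp add: a_def)
  have ta: "t = a * s2" using s2 by (simp add: a_def)
  have "se_mse p s1 (a * s1) < se_mse p s2 (a * s2)"
    unfolding se_mse_def
  proof (rule pp.integral_less_AE_space)
    show "integrable p (\<lambda>b. \<integral>w. (soft_thr (b + s1 * w) (a * s1) - b)\<^sup>2 \<partial>std_gauss)"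
      "integrable p (\<lambda>b. \<integral>w. (soft_thr (b + s2 * w) (a * s2) - b)\<^sup>2 \<partial>std_gauss)"
      using a s by (auto intro!: G_int[OF p sp ib])
    show "AE b in p. (\<integral>w. (soft_thr (b + s1 * w) (a * s1) - b)\<^sup>2 \<partial>std_gauss) < (\<integral>w. (soft_thr (b + s2 * w) (a * s2) - b)\<^sup>2 \<partial>std_gauss)"
      using gauss_strict[OF a s] by (intro AE_I2)
    show "emeasure p (space p) \<noteq> 0" by (simp add: pp.emeasure_space_1)
  qed
  then show ?thesis using a s ta by (intro exI[of _ "a * s1"]) auto
qed

lemma se_mse_nonneg: "0 \<le> se_mse p s t"
  unfolding se_mse_def by (intro integral_nonneg_AE AE_I2 integral_nonneg_AE) auto

lemma se_aux_nonneg: "0 < \<delta> \<Longrightarrow> 0 \<le> sw2 \<Longrightarrow> 0 \<le> se_aux p \<delta> sw2 \<tau> k"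
  using se_mse_nonneg[of p] by (cases k) auto

lemma se_aux_cong:
  "(\<And>i. 1 \<le> i \<Longrightarrow> i \<le> k \<Longrightarrow> \<tau> i = \<rho> i) \<Longrightarrow> se_aux p \<delta> sw2 \<tau> k = se_aux p \<delta> sw2 \<rho> k"
  by (induction k) auto

theorem theorem6:
  fixes p :: "real measure" and \<delta> sw2 :: real and T :: nat and \<tau> :: "nat \<Rightarrow> real"
  assumes "prob_space p" and "sets p = sets borel"
    and "integrable p (\<lambda>b. b\<^sup>2)"
    and "0 < \<delta>" and "\<delta> < 1" and "0 \<le> sw2"
    and "2 \<le> T"
    and "\<forall>i\<in>{1..<T}. 0 \<le> \<tau> i"
    and "asymp_optimal p \<delta> sw2 T \<tau>"
  shows "\<forall>t. 1 \<le> t \<and> t < T \<longrightarrow> asymp_optimal p \<delta> sw2 t \<tau>"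
proof (intro allI impI)
  fix t assume t: "1 \<le> t \<and> t < T"
  have opt: "\<And>\<tau>'. (\<forall>i\<in>{1..<T}. 0 \<le> \<tau>' i) \<Longrightarrow> se_aux p \<delta> sw2 \<tau> (T - 1) \<le> se_aux p \<delta> sw2 \<tau>' (T - 1)"
    using assms(9) unfolding asymp_optimal_def se_sigma_def by blast
  have tnn: "\<And>i. 1 \<le> i \<Longrightarrow> i < T \<Longrightarrow> 0 \<le> \<tau> i" using assms(8) by auto
  have main: "se_aux p \<delta> sw2 \<tau> (t - 1) \<le> se_aux p \<delta> sw2 \<tau>' (t - 1)"
    if \<tau>': "\<forall>i\<in>{1..<t}. 0 \<le> \<tau>' i" for \<tau>'
  proof (rule ccontr)
    assume "\<not> ?thesis"
    then have lt: "se_aux p \<delta> sw2 \<tau>' (t - 1) < se_aux p \<delta> sw2 \<tau> (t - 1)" by simp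
    have ex: "\<exists>\<rho>. (\<forall>i. 1 \<le> i \<and> i \<le> j \<longrightarrow> 0 \<le> \<rho> i) \<and> se_aux p \<delta> sw2 \<rho> j < se_aux p \<delta> sw2 \<tau> j"
      if "t - 1 \<le> j" "j \<le> T - 1" for j
      using that
    proof (induction j rule: dec_induct)
      case base
      then show ?case using \<tau>' lt t by (intro exI[of _ \<tau>']) auto
    next
      case (step n)
      then obtain \<rho> where \<rho>: "\<forall>i. 1 \<le> i \<and> i \<le> n \<longrightarrow> 0 \<le> \<rho> i"
        "se_aux p \<delta> sw2 \<rho> n < se_aux p \<delta> sw2 \<tau> n" by auto
      have "0 \<le> \<tau> (Suc n)" using step t by (intro tnn) auto
      then obtain t' where t': "0 \<le> t'"
        "se_mse p (se_aux p \<delta> sw2 \<rho> n) t' < se_mse p (se_aux p \<delta> sw2 \<tau> n) (\<tau> (Suc n))"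
        using key_step[OF assms(1-3) se_aux_nonneg[OF assms(4,6)] \<rho>(2)] by blast
      define \<rho>' where "\<rho>' = \<rho>(Suc n := t')"
      have eq: "se_aux p \<delta> sw2 \<rho>' n = se_aux p \<delta> sw2 \<rho> n"
        by (rule se_aux_cong) (simp add: \<rho>'_def)
      have "sw2 + 1 / \<delta> * se_mse p (se_aux p \<delta> sw2 \<rho> n) t'
          < sw2 + 1 / \<delta> * se_mse p (se_aux p \<delta> sw2 \<tau> n) (\<tau> (Suc n))"
        using t'(2) assms(4) by (simp add: divide_strict_right_mono)
      then have "se_aux p \<delta> sw2 \<rho>' (Suc n) < se_aux p \<delta> sw2 \<tau> (Suc n)"
        using eq by (simp add: \<rho>'_def)
      moreover have "\<forall>i. 1 \<le> i \<and> i \<le> Suc n \<longrightarrow> 0 \<le> \<rho>' i"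
        using \<rho>(1) t'(1) by (auto simp: \<rho>'_def le_Suc_eq)
      ultimately show ?case by blast
    qed
    have tle: "t - 1 \<le> T - 1" using t by (intro diff_le_mono) simp
    from ex[OF tle order.refl] obtain \<rho> where
      \<rho>: "\<forall>i. 1 \<le> i \<and> i \<le> T - 1 \<longrightarrow> 0 \<le> \<rho> i" "se_aux p \<delta> sw2 \<rho> (T - 1) < se_aux p \<delta> sw2 \<tau> (T - 1)"
      by auto
    have "\<forall>i\<in>{1..<T}. 0 \<le> \<rho> i" using \<rho>(1) by auto
    from opt[OF this] \<rho>(2) show False by simp
  qed
  show "asymp_optimal p \<delta> sw2 t \<tau>"
    unfolding asymp_optimal_def se_sigma_def using main tnn t by auto
qed

end
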